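(* Let $P$ be a nondeterministic probabilistic program with CFG $(V_p,V_r,L,\to)$, linear invariant $I$, and a PUCS $h$ with respect to $I$ that is nonnegative, i.e. $h(\ell,\mathbf{w})\ge 0$ for all labels $\ell$ and all $\mathbf{w}\in I(\ell)$. If all step-wise costs in $P$ are nonnegative, i.e. $R_\ell(\mathbf{w})\ge 0$ for every tick label $\ell$ and every $\mathbf{w}\in I(\ell)$, then $\mathrm{supval}(\mathbf{v})\le h(\ell_{in},\mathbf{v})$ for all initial valuations $\mathbf{v}\in I(\ell_{in})$. (No bounded update or concentration assumption is required.)
   Context: Program model. A program is given by its control-flow graph (CFG) $(V_p,V_r,L,\to)$: $V_p$ is a finite set of real-valued program variables, $V_r$ a finite set of sampling variables, each $r\in V_r$ having a fixed probability distribution on $\mathbb{R}$ (assumed such that all expectations appearing in the pre-expectation below are finite); a valuation over a set $V$ is a map $V\to\mathbb{R}$, and $\mathrm{Val}(V)$ is the set of valuations. The finite label set $L$ is partitioned into assignment labels $L_a$, branching labels $L_b$, probabilistic labels $L_p$, nondeterministic labels $L_{nd}$, tick labels $L_t$, and a terminal label $\ell_{out}$; $\ell_{in}$ is the initial label. An assignment label $\ell$ has a unique successor $\ell'$ and a polynomial update function $F_\ell:\mathrm{Val}(V_p)\times\mathrm{Val}(V_r)\to\mathrm{Val}(V_p)$; a branching label has a condition $\phi$ over $V_p$ with successor $\ell_1$ if $\phi$ holds and $\ell_2$ otherwise; a probabilistic label has $p\in[0,1]$ and goes to successor $\ell_1$ with probability $p$ and $\ell_2$ with probability $1-p$; a nondeterministic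 label has two successors; a tick label has a unique successor $\ell'$ and a polynomial cost function $R_\ell:\mathrm{Val}(V_p)\to\mathbb{R}$. Only assignments change the valuation. A configuration is a pair $(\ell,\mathbf{v})$; a run is an infinite sequence of configurations. A scheduler maps every finite run ending in a configuration with a nondeterministic label to one of that label's successors. Given a scheduler $\sigma$ and initial valuation $\mathbf{v}$, runs start at $(\ell_{in},\mathbf{v})$ and evolve as follows: at $\ell_{out}$ the run stays forever; at an assignment label a fresh valuation $\mathbf{u}$ of $V_r$ is sampled independently (each $r$ from its distribution) and the next configuration is $(\ell',F_\ell(\mathbf{v},\mathbf{u}))$; branching/probabilistic/nondeterministic/tick labels move to the successor determined by the condition/coin/scheduler/unique successor without changing the valuation. This yields a probability measure $\mathbb{P}^\sigma_{\mathbf{v}}$ on runs with expectation $\mathbb{E}^\sigma_{\mathbf{v}}$. For a run $\{(\ell_n,\mathbf{v}_n)\}_n$, the step cost is $C_m=R_{\ell_m}(\mathbf{v}_m)$ if $\ell_m\in L_t$ and $C_m=0$ otherwise; $C_\infty=\sum_{m=0}^\infty C_m$; and $\mathrm{supval}(\mathbf{v})=\sup_\sigma\mathbb{E}^\sigma_{\mathbf{v}}(C_\infty)$. Invariant. A linear invariant is a map $I$ assigning to each label a finite union of polyhedra $I(\ell)\subseteq\mathrm{Val}(V_p)$ such that for every $\mathbf{v}\in I(\ell_{in})$, every configuration $(\ell,\mathbf{w})$ reachable from $(\ell_{in},\mathbf{v})$ satisfies $\mathbf{w}\in I(\ell)$. Pre-expectation. For $h:L\times\mathrm{Val}(V_p)\to\mathbb{R}$,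 $\mathrm{pre}_h(\ell,\mathbf{v})$ is: $h(\ell,\mathbf{v})$ if $\ell=\ell_{out}$; $\mathbb{E}_{\mathbf{u}}[h(\ell',F_\ell(\mathbf{v},\mathbf{u}))]$ if $\ell\in L_a$ (with $\mathbf{u}$ distributed as the sampling variables); $\mathbf{1}_{\mathbf{v}\models\phi}h(\ell_1,\mathbf{v})+\mathbf{1}_{\mathbf{v}\not\models\phi}h(\ell_2,\mathbf{v})$ if $\ell\in L_b$; $p\,h(\ell_1,\mathbf{v})+(1-p)h(\ell_2,\mathbf{v})$ if $\ell\in L_p$; $R_\ell(\mathbf{v})+h(\ell',\mathbf{v})$ if $\ell\in L_t$; the maximum of $h(\ell'',\mathbf{v})$ over the successors $\ell''$ of $\ell$ if $\ell\in L_{nd}$. PUCS. A polynomial upper cost supermartingale (PUCS) of degree $d$ w.r.t. $I$ is $h:L\times\mathrm{Val}(V_p)\to\mathbb{R}$ such that (C1) each $h(\ell,\cdot)$ is a polynomial of degree at most $d$ in the program variables; (C2) $h(\ell_{out},\mathbf{v})=0$ for all $\mathbf{v}$; (C3) $\mathrm{pre}_h(\ell,\mathbf{v})\le h(\ell,\mathbf{v})$ for all $\ell\ne\ell_{out}$ and all $\mathbf{v}\in I(\ell)$. *)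

theory Defs
  imports "HOL-Probability.Probability"
begin

type_synonym 'a val = "'a \<Rightarrow> real"

definition poly_deg_le :: "nat \<Rightarrow> ('a::finite val \<Rightarrow> real) \<Rightarrow> bool" where
  "poly_deg_le d f \<longleftrightarrow>
     (\<exists>c :: ('a \<Rightarrow> nat) \<Rightarrow> real.
        finite {\<alpha>. c \<alpha> \<noteq> 0} \<and>
        (\<forall>\<alpha>. c \<alpha> \<noteq> 0 \<longrightarrow> (\<Sum>x\<in>UNIV. \<alpha> x) \<le> d) \<and>
        (\<forall>v. f v = (\<Sum>\<alpha>\<in>{\<alpha>. c \<alpha> \<noteq> 0}. c \<alpha> * (\<Prod>x\<in>UNIV. v x ^ \<alpha> x))))"

definition is_poly :: "('a::finite val \<Rightarrow> real) \<Rightarrow> bool" where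
  "is_poly f \<longleftrightarrow> (\<exists>d. poly_deg_le d f)"

text \<open>Each label carries its kind and data: assignment (successor, update), branching
  (condition as a set of valuations, then/else successor), probabilistic (p, two successors),
  nondeterministic (two successors), tick (cost function, successor), terminal.\<close>
datatype ('l, 'v, 'r) node =
    Assign 'l "'v val \<Rightarrow> 'r val \<Rightarrow> 'v val"
  | Branch "'v val set" 'l 'l
  | Prob real 'l 'l
  | NDet 'l 'l
  | Tick "'v val \<Rightarrow> real" 'l
  | Out

definition wf_program ::
  "('l::finite \<Rightarrow> ('l, 'v::finite, 'r::finite) node) \<Rightarrow> 'l \<Rightarrow> ('r \<Rightarrow> real measure) \<Rightarrow> bool" where
  "wf_program G lout D \<longleftrightarrow>
     (\<forall>l. G l = Out \<longleftrightarrow> l = lout) \<and>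
     (\<forall>r. prob_space (D r) \<and> sets (D r) = sets borel) \<and>
     (\<forall>l l' F. G l = Assign l' F \<longrightarrow>
         (\<forall>x. is_poly (\<lambda>z :: ('v + 'r) val. F (z \<circ> Inl) (z \<circ> Inr) x))) \<and>
     (\<forall>l \<phi> l1 l2. G l = Branch \<phi> l1 l2 \<longrightarrow> \<phi> \<in> sets (PiM UNIV (\<lambda>_::'v. borel))) \<and>
     (\<forall>l p l1 l2. G l = Prob p l1 l2 \<longrightarrow> 0 \<le> p \<and> p \<le> 1) \<and>
     (\<forall>l R l'. G l = Tick R l' \<longrightarrow> is_poly R)"

definition samp :: "('r \<Rightarrow> real measure) \<Rightarrow> 'r val measure" where
  "samp D = PiM UNIV D"

definition polyhedron :: "'v::finite val set \<Rightarrow> bool" where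
  "polyhedron P \<longleftrightarrow> (\<exists>A :: ('v val \<times> real) set. finite A \<and>
       P = {v. \<forall>(a, b)\<in>A. (\<Sum>x\<in>UNIV. a x * v x) \<le> b})"

definition fin_union_polyhedra :: "'v::finite val set \<Rightarrow> bool" where
  "fin_union_polyhedra S \<longleftrightarrow> (\<exists>F. finite F \<and> (\<forall>P\<in>F. polyhedron P) \<and> S = \<Union>F)"

definition supp_real :: "real measure \<Rightarrow> real set" where
  "supp_real M = {x. \<forall>e>0. 0 < measure M {x - e<..<x + e}}"

definition succs ::
  "('l \<Rightarrow> ('l, 'v, 'r) node) \<Rightarrow> ('r \<Rightarrow> real measure) \<Rightarrow> 'l \<times> 'v val \<Rightarrow> ('l \<times> 'v val) set" where
  "succs G D c = (case c of (l, v) \<Rightarrow>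
     (case G l of
        Out \<Rightarrow> {(l, v)}
      | Assign l' F \<Rightarrow> {(l', F v u) | u. \<forall>r. u r \<in> supp_real (D r)}
      | Branch \<phi> l1 l2 \<Rightarrow> {(if v \<in> \<phi> then l1 else l2, v)}
      | Prob p l1 l2 \<Rightarrow> (if 0 < p then {(l1, v)} else {}) \<union> (if p < 1 then {(l2, v)} else {})
      | NDet l1 l2 \<Rightarrow> {(l1, v), (l2, v)}
      | Tick R l' \<Rightarrow> {(l', v)}))"

definition reachable ::
  "('l \<Rightarrow> ('l, 'v, 'r) node) \<Rightarrow> ('r \<Rightarrow> real measure) \<Rightarrow> 'l \<times> 'v val \<Rightarrow> 'l \<times> 'v val \<Rightarrow> bool" where
  "reachable G D c c' \<longleftrightarrow> (c, c') \<in> {(a, b). b \<in> succs G D a}\<^sup>*"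

definition linear_invariant ::
  "('l \<Rightarrow> ('l, 'v::finite, 'r) node) \<Rightarrow> ('r \<Rightarrow> real measure) \<Rightarrow> 'l \<Rightarrow> ('l \<Rightarrow> 'v val set) \<Rightarrow> bool" where
  "linear_invariant G D lin I \<longleftrightarrow>
     (\<forall>l. fin_union_polyhedra (I l)) \<and>
     (\<forall>v\<in>I lin. \<forall>l w. reachable G D (lin, v) (l, w) \<longrightarrow> w \<in> I l)"

text \<open>Randomness of one step: a sample of all sampling variables and a uniform coin in [0,1]
  (used for probabilistic labels: go to the first successor iff coin < p).\<close>
definition step_space :: "('r \<Rightarrow> real measure) \<Rightarrow> ('r val \<times> real) measure" where
  "step_space D = samp D \<Otimes>\<^sub>M uniform_measure lborel {0..1::real}"

definition rand_space :: "('r \<Rightarrow> real measure) \<Rightarrow> (nat \<Rightarrow> 'r val \<times> real) measure" where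
  "rand_space D = PiM UNIV (\<lambda>_::nat. step_space D)"

definition next_conf ::
  "('l \<Rightarrow> ('l, 'v, 'r) node) \<Rightarrow> (('l \<times> 'v val) list \<Rightarrow> 'l) \<Rightarrow> ('l \<times> 'v val) list
     \<Rightarrow> 'r val \<times> real \<Rightarrow> 'l \<times> 'v val" where
  "next_conf G \<sigma> \<rho> s = (case last \<rho> of (l, v) \<Rightarrow> case s of (u, c) \<Rightarrow>
     (case G l of
        Out \<Rightarrow> (l, v)
      | Assign l' F \<Rightarrow> (l', F v u)
      | Branch \<phi> l1 l2 \<Rightarrow> (if v \<in> \<phi> then l1 else l2, v)
      | Prob p l1 l2 \<Rightarrow> (if c < p then l1 else l2, v)
      | NDet l1 l2 \<Rightarrow> (\<sigma> \<rho>, v)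
      | Tick R l' \<Rightarrow> (l', v)))"

text \<open>The finite run prefix of length n+1.\<close>
fun hist ::
  "('l \<Rightarrow> ('l, 'v, 'r) node) \<Rightarrow> 'l \<Rightarrow> (('l \<times> 'v val) list \<Rightarrow> 'l) \<Rightarrow> 'v val
     \<Rightarrow> (nat \<Rightarrow> 'r val \<times> real) \<Rightarrow> nat \<Rightarrow> ('l \<times> 'v val) list" where
  "hist G lin \<sigma> v \<omega> 0 = [(lin, v)]"
| "hist G lin \<sigma> v \<omega> (Suc n) = hist G lin \<sigma> v \<omega> n @ [next_conf G \<sigma> (hist G lin \<sigma> v \<omega> n) (\<omega> n)]"

definition conf where
  "conf G lin \<sigma> v \<omega> n = last (hist G lin \<sigma> v \<omega> n)"

definition step_cost :: "('l \<Rightarrow> ('l, 'v, 'r) node) \<Rightarrow> 'l \<times> 'v val \<Rightarrow> real" where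
  "step_cost G c = (case c of (l, v) \<Rightarrow> (case G l of Tick R l' \<Rightarrow> R v | _ \<Rightarrow> 0))"

definition total_cost where
  "total_cost G lin \<sigma> v \<omega> = lim (\<lambda>n. ereal (\<Sum>m<n. step_cost G (conf G lin \<sigma> v \<omega> m)))"

definition ereal_expect :: "'a measure \<Rightarrow> ('a \<Rightarrow> ereal) \<Rightarrow> ereal" where
  "ereal_expect M X = enn2ereal (\<integral>\<^sup>+ \<omega>. e2ennreal (X \<omega>) \<partial>M) - enn2ereal (\<integral>\<^sup>+ \<omega>. e2ennreal (- X \<omega>) \<partial>M)"

definition valid_sched :: "('l \<Rightarrow> ('l, 'v, 'r) node) \<Rightarrow> (('l \<times> 'v val) list \<Rightarrow> 'l) \<Rightarrow> bool" where
  "valid_sched G \<sigma> \<longleftrightarrow> (\<forall>\<rho> l1 l2. \<rho> \<noteq> [] \<longrightarrow> G (fst (last \<rho>)) = NDet l1 l2 \<longrightarrow> \<sigma> \<rho> \<in> {l1, l2})"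

text \<open>Measurability of the induced run process (so that the probability measure on runs exists).\<close>
definition admissible where
  "admissible G D lin \<sigma> v \<longleftrightarrow>
     (\<forall>n. (\<lambda>\<omega>. fst (conf G lin \<sigma> v \<omega> n)) \<in> measurable (rand_space D) (count_space UNIV) \<and>
          (\<forall>x. (\<lambda>\<omega>. snd (conf G lin \<sigma> v \<omega> n) x) \<in> borel_measurable (rand_space D)))"

definition supval ::
  "('l \<Rightarrow> ('l, 'v, 'r) node) \<Rightarrow> ('r \<Rightarrow> real measure) \<Rightarrow> 'l \<Rightarrow> 'v val \<Rightarrow> ereal" where
  "supval G D lin v = (SUP \<sigma>\<in>{\<sigma>. valid_sched G \<sigma> \<and> admissible G D lin \<sigma> v}.
                         ereal_expect (rand_space D) (total_cost G lin \<sigma> v))"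

definition pre ::
  "('l \<Rightarrow> ('l, 'v, 'r) node) \<Rightarrow> ('r \<Rightarrow> real measure) \<Rightarrow> ('l \<Rightarrow> 'v val \<Rightarrow> real) \<Rightarrow> 'l \<Rightarrow> 'v val \<Rightarrow> real" where
  "pre G D h l v =
     (case G l of
        Out \<Rightarrow> h l v
      | Assign l' F \<Rightarrow> (\<integral>u. h l' (F v u) \<partial>samp D)
      | Branch \<phi> l1 l2 \<Rightarrow> (if v \<in> \<phi> then h l1 v else h l2 v)
      | Prob p l1 l2 \<Rightarrow> p * h l1 v + (1 - p) * h l2 v
      | NDet l1 l2 \<Rightarrow> max (h l1 v) (h l2 v)
      | Tick R l' \<Rightarrow> R v + h l' v)"

definition PUCS ::
  "('l \<Rightarrow> ('l, 'v::finite, 'r) node) \<Rightarrow> ('r \<Rightarrow> real measure) \<Rightarrow> ('l \<Rightarrow> 'v val set) \<Rightarrow> 'l \<Rightarrow> nat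
     \<Rightarrow> ('l \<Rightarrow> 'v val \<Rightarrow> real) \<Rightarrow> bool" where
  "PUCS G D I lout d h \<longleftrightarrow>
     (\<forall>l. poly_deg_le d (h l)) \<and>
     (\<forall>v. h lout v = 0) \<and>
     (\<forall>l. l \<noteq> lout \<longrightarrow> (\<forall>v\<in>I l. pre G D h l v \<le> h l v))"

end

theory Submission
  imports Defs
begin

lemma supp_AE:
  fixes M :: "real measure"
  assumes P: "prob_space M" and S: "sets M = sets borel"
  shows "AE x in M. x \<in> supp_real M"
proof -
  interpret prob_space M by fact
  define A where "A = (\<lambda>(q1::rat, q2::rat). if measure M {real_of_rat q1<..<real_of_rat q2} = 0
      then {real_of_rat q1<..<real_of_rat q2} else {})"
  have "A q \<in> null_sets M" for q
  proof -
    obtain q1 q2 where q: "q = (q1,q2)" by (cases q)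
    have s: "{real_of_rat q1<..<real_of_rat q2} \<in> sets M" using S by simp
    show ?thesis using s by (auto simp: A_def q emeasure_eq_measure)
  qed
  hence N: "(\<Union>q. A q) \<in> null_sets M" by (rule null_sets_UN)
  have "{x \<in> space M. \<not> x \<in> supp_real M} \<subseteq> (\<Union>q. A q)"
  proof
    fix x assume "x \<in> {x \<in> space M. x \<notin> supp_real M}"
    then obtain e where e: "e > 0" "\<not> 0 < measure M {x - e<..<x + e}" by (auto simp: supp_real_def)
    then have m0: "measure M {x - e<..<x + e} = 0" using measure_nonneg[of M "{x - e<..<x + e}"] by linarith
    obtain q1 where q1: "x - e < real_of_rat q1" "real_of_rat q1 < x" using of_rat_dense[of "x-e" x] e by auto
    obtain q2 where q2: "x < real_of_rat q2" "real_of_rat q2 < x + e" using of_rat_dense[of x "x+e"] e by auto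
    have sub: "{real_of_rat q1<..<real_of_rat q2} \<subseteq> {x - e<..<x + e}" using q1 q2 by auto
    have "measure M {real_of_rat q1<..<real_of_rat q2} \<le> measure M {x - e<..<x + e}"
      by (rule finite_measure_mono[OF sub]) (use S in simp)
    hence "measure M {real_of_rat q1<..<real_of_rat q2} = 0"
      using m0 measure_nonneg[of M "{real_of_rat q1<..<real_of_rat q2}"] by linarith
    hence "x \<in> A (q1,q2)" using q1 q2 by (simp add: A_def)
    thus "x \<in> (\<Union>q. A q)" by blast
  qed
  thus ?thesis using N by (intro AE_I') auto
qed

lemma prob_unif: "prob_space (uniform_measure lborel {0..1::real})"
  by (rule prob_space_uniform_measure) auto

lemma AE_unif: "AE x in uniform_measure lborel {0..1::real}. 0 \<le> x \<and> x < 1"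
  by (rule AE_uniform_measureI) (auto intro: eventually_mono[OF AE_lborel_singleton[of 1]])

lemma seq_decomp:
  assumes P: "prob_space M" and f: "f \<in> borel_measurable (PiM UNIV (\<lambda>_::nat. M))"
  shows "(\<integral>\<^sup>+\<omega>. f \<omega> \<partial>PiM UNIV (\<lambda>_::nat. M)) =
     (\<integral>\<^sup>+s. (\<integral>\<^sup>+\<omega>. f (case_nat s \<omega>) \<partial>PiM UNIV (\<lambda>_::nat. M)) \<partial>M)"
proof -
  interpret sequence_space M
    by (simp add: sequence_space_def product_prob_space_def product_prob_space_axioms_def
        product_sigma_finite_def P prob_space_imp_sigma_finite)
  have meas: "(\<lambda>(s, \<omega>). case_nat s \<omega>) \<in> measurable (M \<Otimes>\<^sub>M PiM UNIV (\<lambda>_::nat. M)) (PiM UNIV (\<lambda>_::nat. M))"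
    by measurable
  have g: "(\<lambda>x. f (case_nat (fst x) (snd x))) \<in> borel_measurable (M \<Otimes>\<^sub>M PiM UNIV (\<lambda>_::nat. M))"
    using measurable_comp[OF meas f] by (simp add: comp_def case_prod_beta')
  have "(\<integral>\<^sup>+\<omega>. f \<omega> \<partial>PiM UNIV (\<lambda>_::nat. M)) =
      (\<integral>\<^sup>+\<omega>. f \<omega> \<partial>distr (M \<Otimes>\<^sub>M PiM UNIV (\<lambda>_::nat. M)) (PiM UNIV (\<lambda>_::nat. M)) (\<lambda>(s, \<omega>). case_nat s \<omega>))"
    by (simp add: PiM_iter)
  also have "\<dots> = (\<integral>\<^sup>+x. f (case_nat (fst x) (snd x)) \<partial>(M \<Otimes>\<^sub>M PiM UNIV (\<lambda>_::nat. M)))"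
    by (subst nn_integral_distr[OF meas]) (use f in \<open>simp_all add: case_prod_beta'\<close>)
  also have "\<dots> = (\<integral>\<^sup>+s. (\<integral>\<^sup>+\<omega>. f (case_nat s \<omega>) \<partial>PiM UNIV (\<lambda>_::nat. M)) \<partial>M)"
    using P.nn_integral_fst[OF g, symmetric] by simp
  finally show ?thesis .
qed

lemma nn_integral_fst_only:
  assumes "prob_space M2" "f \<in> borel_measurable M1"
  shows "(\<integral>\<^sup>+s. f (fst s) \<partial>(M1 \<Otimes>\<^sub>M M2)) = (\<integral>\<^sup>+x. f x \<partial>M1)"
proof -
  interpret prob_space M2 by fact
  have m: "(\<lambda>s. f (fst s)) \<in> borel_measurable (M1 \<Otimes>\<^sub>M M2)" using assms(2) by measurable
  show ?thesis using nn_integral_fst[OF m] by (simp add: emeasure_space_1)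
qed

lemma nn_integral_snd_only:
  assumes "prob_space M1" "prob_space M2" "f \<in> borel_measurable M2"
  shows "(\<integral>\<^sup>+s. f (snd s) \<partial>(M1 \<Otimes>\<^sub>M M2)) = (\<integral>\<^sup>+x. f x \<partial>M2)"
proof -
  interpret pair_sigma_finite M1 M2
    using assms by (simp add: pair_sigma_finite_def prob_space_imp_sigma_finite)
  interpret M1: prob_space M1 by fact
  have m: "(\<lambda>s. f (snd s)) \<in> borel_measurable (M1 \<Otimes>\<^sub>M M2)" using assms(3) by measurable
  show ?thesis using nn_integral_snd[OF m] by (simp add: M1.emeasure_space_1)
qed

lemma AE_pair_fst:
  assumes "prob_space M1" "prob_space M2" "AE x in M1. P x"
  shows "AE s in M1 \<Otimes>\<^sub>M M2. P (fst s)"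
proof -
  have sf2: "sigma_finite_measure M2"
    using assms by (simp add: prob_space_imp_sigma_finite)
  from assms(3) obtain N where N: "{x \<in> space M1. \<not> P x} \<subseteq> N" "emeasure M1 N = 0" "N \<in> sets M1"
    by (elim AE_E)
  have "N \<times> space M2 \<in> null_sets (M1 \<Otimes>\<^sub>M M2)"
    by (rule sigma_finite_measure.times_in_null_sets1[OF sf2]) (use N in \<open>auto simp: null_sets_def\<close>)
  moreover have "{s \<in> space (M1 \<Otimes>\<^sub>M M2). \<not> P (fst s)} \<subseteq> N \<times> space M2"
    using N(1) by (auto simp: space_pair_measure)
  ultimately show ?thesis by (rule AE_I')
qed

lemma AE_pair_snd:
  assumes "prob_space M1" "prob_space M2" "AE x in M2. P x"
  shows "AE s in M1 \<Otimes>\<^sub>M M2. P (snd s)"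
proof -
  have sf2: "sigma_finite_measure M2"
    using assms by (simp add: prob_space_imp_sigma_finite)
  from assms(3) obtain N where N: "{x \<in> space M2. \<not> P x} \<subseteq> N" "emeasure M2 N = 0" "N \<in> sets M2"
    by (elim AE_E)
  have "space M1 \<times> N \<in> null_sets (M1 \<Otimes>\<^sub>M M2)"
    by (rule sigma_finite_measure.times_in_null_sets2[OF sf2]) (use N in \<open>auto simp: null_sets_def\<close>)
  moreover have "{s \<in> space (M1 \<Otimes>\<^sub>M M2). \<not> P (snd s)} \<subseteq> space M1 \<times> N"
    using N(1) by (auto simp: space_pair_measure)
  ultimately show ?thesis by (rule AE_I')
qed

lemma poly_meas:
  assumes "poly_deg_le d f" "\<And>x. (\<lambda>\<omega>. g \<omega> x) \<in> borel_measurable M"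
  shows "(\<lambda>\<omega>. f (g \<omega>)) \<in> borel_measurable M"
proof -
  from assms(1) obtain c where c: "\<forall>v. f v = (\<Sum>\<alpha>\<in>{\<alpha>. c \<alpha> \<noteq> 0}. c \<alpha> * (\<Prod>x\<in>UNIV. v x ^ \<alpha> x))"
    unfolding poly_deg_le_def by blast
  have "(\<lambda>\<omega>. \<Sum>\<alpha>\<in>{\<alpha>. c \<alpha> \<noteq> 0}. c \<alpha> * (\<Prod>x\<in>UNIV. g \<omega> x ^ \<alpha> x)) \<in> borel_measurable M"
    by (intro borel_measurable_sum borel_measurable_times borel_measurable_const
        borel_measurable_prod borel_measurable_power assms(2))
  then show ?thesis using c by simp
qed

lemma ennreal_add_le: assumes a: "0 \<le> (a::real)" shows "ennreal (a + b) \<le> ennreal a + ennreal b"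
proof (cases "0 \<le> b")
  case True then show ?thesis using a by simp
next
  case False
  have "ennreal (a + b) \<le> ennreal a" using False by (intro ennreal_leI) simp
  also have "\<dots> \<le> ennreal a + ennreal b" by simp
  finally show ?thesis .
qed


definition shs where "shs \<sigma> c = (\<lambda>\<rho>. \<sigma> (c # \<rho>))"

definition GS :: "('r \<Rightarrow> real measure) \<Rightarrow> ('r val \<times> real) set" where
  "GS D = {(u, x). (\<forall>r. u r \<in> supp_real (D r)) \<and> 0 \<le> x \<and> x < 1}"

definition Sf where
  "Sf G h l \<sigma> w \<omega> n = (\<Sum>m<n. step_cost G (conf G l \<sigma> w \<omega> m)) + case_prod h (conf G l \<sigma> w \<omega> n)"

lemma hist_ne: "hist G l \<sigma> w \<omega> n \<noteq> []" by (cases n) auto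

lemma next_conf_Cons: "\<rho> \<noteq> [] \<Longrightarrow> next_conf G \<sigma> (c # \<rho>) s = next_conf G (shs \<sigma> c) \<rho> s"
  by (simp add: next_conf_def shs_def)

lemma hist_Suc_shift:
  "hist G l \<sigma> w \<omega> (Suc n) = (l, w) # hist G (fst (next_conf G \<sigma> [(l,w)] (\<omega> 0))) (shs \<sigma> (l,w))
      (snd (next_conf G \<sigma> [(l,w)] (\<omega> 0))) (\<lambda>k. \<omega> (Suc k)) n"
proof (induction n)
  case 0 show ?case by simp
next
  case (Suc n)
  let ?c = "next_conf G \<sigma> [(l,w)] (\<omega> 0)"
  let ?H = "hist G (fst ?c) (shs \<sigma> (l,w)) (snd ?c) (\<lambda>k. \<omega> (Suc k))"
  have "hist G l \<sigma> w \<omega> (Suc (Suc n)) = hist G l \<sigma> w \<omega> (Suc n) @ [next_conf G \<sigma> (hist G l \<sigma> w \<omega> (Suc n)) (\<omega> (Suc n))]"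
    by (rule hist.simps(2))
  also have "\<dots> = ((l,w) # ?H n) @ [next_conf G \<sigma> ((l,w) # ?H n) (\<omega> (Suc n))]"
    by (simp only: Suc)
  also have "\<dots> = (l,w) # (?H n @ [next_conf G (shs \<sigma> (l,w)) (?H n) (\<omega> (Suc n))])"
    by (simp add: next_conf_Cons hist_ne del: hist.simps)
  also have "\<dots> = (l,w) # ?H (Suc n)" by simp
  finally show ?case .
qed

lemma conf_0: "conf G l \<sigma> w \<omega> 0 = (l, w)" by (simp add: conf_def)

lemma conf_Suc_shift:
  "conf G l \<sigma> w \<omega> (Suc m) = conf G (fst (next_conf G \<sigma> [(l,w)] (\<omega> 0))) (shs \<sigma> (l,w))
      (snd (next_conf G \<sigma> [(l,w)] (\<omega> 0))) (\<lambda>k. \<omega> (Suc k)) m"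
  unfolding conf_def by (subst hist_Suc_shift) (simp add: hist_ne del: hist.simps)

lemma conf_Suc: "conf G l \<sigma> w \<omega> (Suc m) = next_conf G \<sigma> (hist G l \<sigma> w \<omega> m) (\<omega> m)"
  by (simp add: conf_def)

lemma Sf_0: "Sf G h l \<sigma> w \<omega> 0 = h l w" by (simp add: Sf_def conf_0)

lemma Sf_Suc:
  "Sf G h l \<sigma> w \<omega> (Suc n) = step_cost G (l, w) + Sf G h (fst (next_conf G \<sigma> [(l,w)] (\<omega> 0))) (shs \<sigma> (l,w))
      (snd (next_conf G \<sigma> [(l,w)] (\<omega> 0))) (\<lambda>k. \<omega> (Suc k)) n"
  unfolding Sf_def by (simp only: sum.lessThan_Suc_shift conf_0 conf_Suc_shift add.assoc)

lemma valid_shs: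
  fixes G :: "'l \<Rightarrow> ('l, 'v, 'r) node" and \<sigma> :: "('l \<times> 'v val) list \<Rightarrow> 'l"
  assumes "valid_sched G \<sigma>" shows "valid_sched G (shs \<sigma> c)"
  unfolding valid_sched_def shs_def
proof (intro allI impI)
  fix \<rho> :: "('l \<times> 'v val) list" and l1 l2 assume "\<rho> \<noteq> []" "G (fst (last \<rho>)) = NDet l1 l2"
  then show "\<sigma> (c # \<rho>) \<in> {l1, l2}" using assms unfolding valid_sched_def
    by (metis last_ConsR list.distinct(1))
qed

lemma next_in_succs:
  assumes "valid_sched G \<sigma>" "\<rho> \<noteq> []" "s \<in> GS D"
  shows "next_conf G \<sigma> \<rho> s \<in> succs G D (last \<rho>)"
proof -
  obtain l w where lw: "last \<rho> = (l, w)" by (cases "last \<rho>")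
  obtain u x where s: "s = (u, x)" by (cases s)
  show ?thesis
  proof (cases "G l")
    case (NDet l1 l2)
    with assms(1,2) lw have "\<sigma> \<rho> \<in> {l1,l2}" by (auto simp: valid_sched_def)
    thus ?thesis using NDet lw s by (auto simp: next_conf_def succs_def)
  next
    case (Prob p l1 l2)
    thus ?thesis using assms lw s by (auto simp: next_conf_def succs_def GS_def)
  qed (use assms lw s in \<open>auto simp: next_conf_def succs_def GS_def\<close>)
qed

lemma reach_step: "reachable G D a b \<Longrightarrow> c \<in> succs G D b \<Longrightarrow> reachable G D a c"
  by (auto simp: reachable_def intro: rtrancl_into_rtrancl)

lemma reach_refl: "reachable G D a a"
  by (auto simp: reachable_def)

lemma prob_samp: assumes "wf_program G lout D" shows "prob_space (samp D)"
  unfolding samp_def by (rule prob_space_PiM) (use assms in \<open>auto simp: wf_program_def\<close>)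

lemma prob_step: assumes "wf_program G lout D" shows "prob_space (step_space D)"
  unfolding step_space_def by (rule prob_space_pair[OF prob_samp[OF assms] prob_unif])

lemma AE_samp: assumes "wf_program G lout D" shows "AE u in samp D. \<forall>r. u r \<in> supp_real (D r)"
proof (rule eventually_all_finite)
  fix r
  show "AE u in samp D. u r \<in> supp_real (D r)"
    unfolding samp_def
    by (rule AE_PiM_component) (use assms supp_AE in \<open>auto simp: wf_program_def\<close>)
qed

lemma AE_GS: assumes "wf_program G lout D" shows "AE s in step_space D. s \<in> GS D"
proof -
  have 1: "AE s in step_space D. \<forall>r. fst s r \<in> supp_real (D r)"
    unfolding step_space_def by (rule AE_pair_fst[OF prob_samp[OF assms] prob_unif AE_samp[OF assms]])
  have 2: "AE s in step_space D. 0 \<le> snd s \<and> snd s < 1"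
    unfolding step_space_def by (rule AE_pair_snd[OF prob_samp[OF assms] prob_unif AE_unif])
  from 1 2 show ?thesis by eventually_elim (auto simp: GS_def)
qed


context
  fixes G :: "'l::finite \<Rightarrow> ('l, 'v::finite, 'r::finite) node"
    and lin lout :: 'l
    and D :: "'r \<Rightarrow> real measure"
    and I :: "'l \<Rightarrow> 'v val set"
    and h :: "'l \<Rightarrow> 'v val \<Rightarrow> real"
    and d :: nat
    and v :: "'v val"
  assumes wf: "wf_program G lout D"
    and inv: "linear_invariant G D lin I"
    and integ: "\<forall>l l' F w. G l = Assign l' F \<longrightarrow> integrable (samp D) (\<lambda>u. h l' (F w u))"
    and pucs: "PUCS G D I lout d h"
    and hnn: "\<forall>l. \<forall>w\<in>I l. 0 \<le> h l w"
    and Rnn: "\<forall>l R l'. G l = Tick R l' \<longrightarrow> (\<forall>w\<in>I l. 0 \<le> R w)"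
    and vI: "v \<in> I lin"
begin

lemma good_I: "reachable G D (lin, v) (l, w) \<Longrightarrow> w \<in> I l"
  using inv vI by (auto simp: linear_invariant_def)

lemma cost_nn: "reachable G D (lin, v) (l, w) \<Longrightarrow> 0 \<le> step_cost G (l, w)"
  using good_I[of l w] Rnn by (auto simp: step_cost_def split: node.split)

lemma cost_nn': "reachable G D (lin, v) c \<Longrightarrow> 0 \<le> step_cost G c"
  using cost_nn[of "fst c" "snd c"] by simp

lemma h_nn: "reachable G D (lin, v) (l, w) \<Longrightarrow> 0 \<le> h l w"
  using good_I[of l w] hnn by auto

lemma h_nn': "reachable G D (lin, v) c \<Longrightarrow> 0 \<le> case_prod h c"
  using h_nn[of "fst c" "snd c"] by (simp add: case_prod_beta)

lemma prob_rand: "prob_space (rand_space D)"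
  unfolding rand_space_def by (rule prob_space_PiM) (use prob_step[OF wf] in auto)

lemma AE_next_good:
  assumes "reachable G D (lin, v) c" "valid_sched G \<sigma>"
  shows "AE s in step_space D. reachable G D (lin, v) (next_conf G \<sigma> [c] s)"
  using AE_GS[OF wf]
proof eventually_elim
  case (elim s)
  then have "next_conf G \<sigma> [c] s \<in> succs G D c" using next_in_succs[OF assms(2), of "[c]" s D] by simp
  then show ?case by (rule reach_step[OF assms(1)])
qed

lemma one_step:
  assumes good: "reachable G D (lin, v) (l, w)" and vs: "valid_sched G \<sigma>"
  shows "(\<integral>\<^sup>+s. ennreal (step_cost G (l, w) + case_prod h (next_conf G \<sigma> [(l, w)] s)) \<partial>step_space D)
     \<le> ennreal (h l w)"
proof -
  have wI: "w \<in> I l" using good_I[OF good] .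
  have PS: "prob_space (step_space D)" by (rule prob_step[OF wf])
  have nout: "G l \<noteq> Out \<Longrightarrow> pre G D h l w \<le> h l w"
    using pucs wI wf by (auto simp: PUCS_def wf_program_def)
  have const: "\<And>K. (\<integral>\<^sup>+s. ennreal K \<partial>step_space D) = ennreal K"
    using prob_space.emeasure_space_1[OF PS] by simp
  show ?thesis
  proof (cases "G l")
    case Out
    then show ?thesis by (simp add: next_conf_def step_cost_def prob_space.emeasure_space_1[OF PS])
  next
    case (Assign l' F)
    have eq: "\<And>s. next_conf G \<sigma> [(l, w)] s = (l', F w (fst s))"
      using Assign by (simp add: next_conf_def split: prod.split)
    have int: "integrable (samp D) (\<lambda>u. h l' (F w u))" using integ Assign by blast
    have mi: "(\<lambda>u. ennreal (h l' (F w u))) \<in> borel_measurable (samp D)"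
      by (rule measurable_compose[OF borel_measurable_integrable[OF int] measurable_ennreal])
    have "(\<integral>\<^sup>+s. ennreal (step_cost G (l, w) + case_prod h (next_conf G \<sigma> [(l, w)] s)) \<partial>step_space D)
        = (\<integral>\<^sup>+s. ennreal (h l' (F w (fst s))) \<partial>step_space D)"
      using Assign by (simp add: eq step_cost_def)
    also have "\<dots> = (\<integral>\<^sup>+u. ennreal (h l' (F w u)) \<partial>samp D)"
      unfolding step_space_def by (rule nn_integral_fst_only[OF prob_unif mi])
    also have "\<dots> = ennreal (\<integral>u. h l' (F w u) \<partial>samp D)"
    proof (rule nn_integral_eq_integral[OF int])
      show "AE u in samp D. 0 \<le> h l' (F w u)"
        using AE_samp[OF wf]
      proof eventually_elim
        case (elim u)
        then have "(l', F w u) \<in> succs G D (l, w)" using Assign by (auto simp: succs_def)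
        then show ?case using h_nn reach_step[OF good] by blast
      qed
    qed
    also have "\<dots> \<le> ennreal (h l w)" using nout Assign by (intro ennreal_leI) (simp add: pre_def)
    finally show ?thesis .
  next
    case (Branch \<phi> l1 l2)
    have "(\<integral>\<^sup>+s. ennreal (step_cost G (l, w) + case_prod h (next_conf G \<sigma> [(l, w)] s)) \<partial>step_space D)
        = ennreal (pre G D h l w)"
      using Branch by (simp add: next_conf_def step_cost_def prob_space.emeasure_space_1[OF PS] pre_def)
    also have "\<dots> \<le> ennreal (h l w)" using nout Branch by (intro ennreal_leI) simp
    finally show ?thesis .
  next
    case (Tick R l')
    have "(\<integral>\<^sup>+s. ennreal (step_cost G (l, w) + case_prod h (next_conf G \<sigma> [(l, w)] s)) \<partial>step_space D)
        = ennreal (pre G D h l w)"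
      using Tick by (simp add: next_conf_def step_cost_def prob_space.emeasure_space_1[OF PS] pre_def)
    also have "\<dots> \<le> ennreal (h l w)" using nout Tick by (intro ennreal_leI) simp
    finally show ?thesis .
  next
    case (NDet l1 l2)
    have sig: "\<sigma> [(l, w)] \<in> {l1, l2}" using vs NDet by (auto simp: valid_sched_def)
    have "(\<integral>\<^sup>+s. ennreal (step_cost G (l, w) + case_prod h (next_conf G \<sigma> [(l, w)] s)) \<partial>step_space D)
        = ennreal (h (\<sigma> [(l, w)]) w)"
      using NDet by (simp add: next_conf_def step_cost_def prob_space.emeasure_space_1[OF PS])
    also have "\<dots> \<le> ennreal (h l w)"
    proof (intro ennreal_leI)
      have "h (\<sigma> [(l, w)]) w \<le> pre G D h l w" using sig NDet by (auto simp: pre_def)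
      then show "h (\<sigma> [(l, w)]) w \<le> h l w" using nout NDet by simp
    qed
    finally show ?thesis .
  next
    case (Prob p l1 l2)
    have p: "0 \<le> p" "p \<le> 1" using wf Prob unfolding wf_program_def by blast+
    define U where "U = uniform_measure lborel {0..1::real}"
    define a where "a = h l1 w"
    define b where "b = h l2 w"
    have eq: "\<And>s. ennreal (step_cost G (l, w) + case_prod h (next_conf G \<sigma> [(l, w)] s))
        = (\<lambda>x. ennreal (if x < p then a else b)) (snd s)"
      using Prob by (simp add: next_conf_def step_cost_def a_def b_def split: prod.split)
    have mf: "(\<lambda>x. ennreal (if x < p then a else b)) \<in> borel_measurable U"
      unfolding U_def by measurable
    have m1: "(\<lambda>x. ennreal a * indicator {..<p} x) \<in> borel_measurable U" unfolding U_def by measurable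
    have m2: "(\<lambda>x. ennreal b * indicator {p..} x) \<in> borel_measurable U" unfolding U_def by measurable
    have "(\<integral>\<^sup>+s. ennreal (step_cost G (l, w) + case_prod h (next_conf G \<sigma> [(l, w)] s)) \<partial>step_space D)
        = (\<integral>\<^sup>+x. ennreal (if x < p then a else b) \<partial>U)"
      unfolding eq step_space_def U_def
      by (rule nn_integral_snd_only[OF prob_samp[OF wf] prob_unif mf[unfolded U_def]])
    also have "\<dots> = (\<integral>\<^sup>+x. ennreal a * indicator {..<p} x + ennreal b * indicator {p..} x \<partial>U)"
      by (intro nn_integral_cong) (auto split: split_indicator)
    also have "\<dots> = ennreal a * emeasure U {..<p} + ennreal b * emeasure U {p..}"
      by (simp only: nn_integral_add[OF m1 m2]) (simp add: nn_integral_cmult_indicator U_def)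
    also have "emeasure U {..<p} = ennreal p"
    proof -
      have "{0..1} \<inter> {..<p} = {0..<p}" using p by auto
      thus ?thesis using p by (simp add: U_def divide_ennreal_def)
    qed
    also have "emeasure U {p..} = ennreal (1 - p)"
    proof -
      have "{0..1} \<inter> {p..} = {p..1}" using p by auto
      thus ?thesis using p by (simp add: U_def divide_ennreal_def)
    qed
    also have "ennreal a * ennreal p = ennreal (p * a)"
    proof (cases "p = 0")
      case False
      then have "(l1, w) \<in> succs G D (l, w)" using p Prob by (auto simp: succs_def)
      then have "0 \<le> a" unfolding a_def using h_nn reach_step[OF good] by blast
      then show ?thesis using p by (simp add: ennreal_mult mult.commute)
    qed simp
    also have "ennreal b * ennreal (1 - p) = ennreal ((1 - p) * b)"
    proof (cases "p = 1")
      case False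
      then have "(l2, w) \<in> succs G D (l, w)" using p Prob by (auto simp: succs_def)
      then have "0 \<le> b" unfolding b_def using h_nn reach_step[OF good] by blast
      then show ?thesis using p by (simp add: ennreal_mult mult.commute)
    qed simp
    also have "ennreal (p * a) + ennreal ((1 - p) * b) \<le> ennreal (h l w)"
    proof -
      have n1: "0 \<le> p * a"
      proof (cases "p = 0")
        case False
        then have "(l1, w) \<in> succs G D (l, w)" using p Prob by (auto simp: succs_def)
        then have "0 \<le> a" unfolding a_def using h_nn reach_step[OF good] by blast
        then show ?thesis using p by simp
      qed simp
      have n2: "0 \<le> (1 - p) * b"
      proof (cases "p = 1")
        case False
        then have "(l2, w) \<in> succs G D (l, w)" using p Prob by (auto simp: succs_def)
        then have "0 \<le> b" unfolding b_def using h_nn reach_step[OF good] by blast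
        then show ?thesis using p by simp
      qed simp
      have "p * a + (1 - p) * b \<le> h l w" using nout Prob by (simp add: pre_def a_def b_def)
      then show ?thesis using n1 n2 by (simp add: ennreal_plus[symmetric] ennreal_leI del: ennreal_plus)
    qed
    finally show ?thesis .
  qed
qed


lemma main:
  "\<forall>l w \<sigma>. reachable G D (lin, v) (l, w) \<longrightarrow> valid_sched G \<sigma> \<longrightarrow>
     (\<lambda>\<omega>. Sf G h l \<sigma> w \<omega> n) \<in> borel_measurable (rand_space D) \<longrightarrow>
     (\<integral>\<^sup>+\<omega>. ennreal (Sf G h l \<sigma> w \<omega> n) \<partial>rand_space D) \<le> ennreal (h l w)"
proof (induction n)
  case 0
  show ?case using prob_space.emeasure_space_1[OF prob_rand] by (simp add: Sf_0)
next
  case (Suc n)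
  show ?case
  proof (intro allI impI)
    fix l w \<sigma> assume good: "reachable G D (lin, v) (l, w)" and vs: "valid_sched G \<sigma>"
      and meas: "(\<lambda>\<omega>. Sf G h l \<sigma> w \<omega> (Suc n)) \<in> borel_measurable (rand_space D)"
    define C where "C = step_cost G (l, w)"
    have C0: "0 \<le> C" using cost_nn[OF good] by (simp add: C_def)
    define c' where "c' s = next_conf G \<sigma> [(l, w)] s" for s
    define \<sigma>' where "\<sigma>' = shs \<sigma> (l, w)"
    have vs': "valid_sched G \<sigma>'" using valid_shs[OF vs] by (simp add: \<sigma>'_def)
    have PS: "prob_space (step_space D)" by (rule prob_step[OF wf])
    have SfS: "\<And>s \<omega>'. Sf G h l \<sigma> w (case_nat s \<omega>') (Suc n) = C + Sf G h (fst (c' s)) \<sigma>' (snd (c' s)) \<omega>' n"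
      by (simp add: Sf_Suc C_def c'_def \<sigma>'_def)
    have meas2: "(\<lambda>x. Sf G h l \<sigma> w (case_nat (fst x) (snd x)) (Suc n)) \<in> borel_measurable (step_space D \<Otimes>\<^sub>M rand_space D)"
    proof -
      have m: "(\<lambda>x. case_nat (fst x) (snd x)) \<in> measurable (step_space D \<Otimes>\<^sub>M rand_space D) (rand_space D)"
        unfolding rand_space_def by measurable
      show ?thesis using measurable_comp[OF m meas] by (simp add: comp_def)
    qed
    have "(\<integral>\<^sup>+\<omega>. ennreal (Sf G h l \<sigma> w \<omega> (Suc n)) \<partial>rand_space D) =
        (\<integral>\<^sup>+s. (\<integral>\<^sup>+\<omega>'. ennreal (Sf G h l \<sigma> w (case_nat s \<omega>') (Suc n)) \<partial>rand_space D) \<partial>step_space D)"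
      unfolding rand_space_def
      by (rule seq_decomp[OF PS], rule measurable_compose[OF meas[unfolded rand_space_def] measurable_ennreal])
    also have "\<dots> \<le> (\<integral>\<^sup>+s. ennreal (C + case_prod h (c' s)) \<partial>step_space D)"
    proof (rule nn_integral_mono_AE)
      show "AE s in step_space D. (\<integral>\<^sup>+\<omega>'. ennreal (Sf G h l \<sigma> w (case_nat s \<omega>') (Suc n)) \<partial>rand_space D)
          \<le> ennreal (C + case_prod h (c' s))"
        using AE_next_good[OF good vs] AE_space
      proof eventually_elim
        case (elim s)
        have goods: "reachable G D (lin, v) (fst (c' s), snd (c' s))" using elim(1) by (simp add: c'_def)
        have ms: "(\<lambda>\<omega>'. Sf G h (fst (c' s)) \<sigma>' (snd (c' s)) \<omega>' n) \<in> borel_measurable (rand_space D)"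
        proof -
          have "(\<lambda>\<omega>'. Sf G h l \<sigma> w (case_nat (fst (s, \<omega>')) (snd (s, \<omega>'))) (Suc n)) \<in> borel_measurable (rand_space D)"
            by (rule measurable_Pair2[OF meas2 elim(2)])
          then have "(\<lambda>\<omega>'. C + Sf G h (fst (c' s)) \<sigma>' (snd (c' s)) \<omega>' n) \<in> borel_measurable (rand_space D)"
            by (simp add: SfS)
          then have "(\<lambda>\<omega>'. (C + Sf G h (fst (c' s)) \<sigma>' (snd (c' s)) \<omega>' n) - C) \<in> borel_measurable (rand_space D)"
            by (rule borel_measurable_diff[OF _ borel_measurable_const])
          then show ?thesis by simp
        qed
        have mse: "(\<lambda>\<omega>'. ennreal (Sf G h (fst (c' s)) \<sigma>' (snd (c' s)) \<omega>' n)) \<in> borel_measurable (rand_space D)"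
          by (rule measurable_compose[OF ms measurable_ennreal])
        have IH: "(\<integral>\<^sup>+\<omega>'. ennreal (Sf G h (fst (c' s)) \<sigma>' (snd (c' s)) \<omega>' n) \<partial>rand_space D)
            \<le> ennreal (h (fst (c' s)) (snd (c' s)))"
          using Suc.IH goods vs' ms by blast
        have hn: "0 \<le> h (fst (c' s)) (snd (c' s))" using h_nn[OF goods] .
        have "(\<integral>\<^sup>+\<omega>'. ennreal (Sf G h l \<sigma> w (case_nat s \<omega>') (Suc n)) \<partial>rand_space D) =
            (\<integral>\<^sup>+\<omega>'. ennreal (C + Sf G h (fst (c' s)) \<sigma>' (snd (c' s)) \<omega>' n) \<partial>rand_space D)"
          by (simp add: SfS)
        also have "\<dots> \<le> (\<integral>\<^sup>+\<omega>'. ennreal C + ennreal (Sf G h (fst (c' s)) \<sigma>' (snd (c' s)) \<omega>' n) \<partial>rand_space D)"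
          by (intro nn_integral_mono ennreal_add_le C0)
        also have "\<dots> = ennreal C + (\<integral>\<^sup>+\<omega>'. ennreal (Sf G h (fst (c' s)) \<sigma>' (snd (c' s)) \<omega>' n) \<partial>rand_space D)"
          by (subst nn_integral_add) (simp_all add: mse prob_space.emeasure_space_1[OF prob_rand])
        also have "\<dots> \<le> ennreal C + ennreal (h (fst (c' s)) (snd (c' s)))"
          using IH by (rule add_left_mono)
        also have "\<dots> = ennreal (C + case_prod h (c' s))" using C0 hn by (simp add: case_prod_beta)
        finally show ?case .
      qed
    qed
    also have "\<dots> \<le> ennreal (h l w)" using one_step[OF good vs] by (simp add: C_def c'_def)
    finally show "(\<integral>\<^sup>+\<omega>. ennreal (Sf G h l \<sigma> w \<omega> (Suc n)) \<partial>rand_space D) \<le> ennreal (h l w)" .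
  qed
qed


lemma final: "supval G D lin v \<le> ereal (h lin v)"
  unfolding supval_def
proof (rule SUP_least)
  fix \<sigma> assume "\<sigma> \<in> {\<sigma>. valid_sched G \<sigma> \<and> admissible G D lin \<sigma> v}"
  then have vs: "valid_sched G \<sigma>" and adm: "admissible G D lin \<sigma> v" by auto
  define P where "P n \<omega> = (\<Sum>m<n. step_cost G (conf G lin \<sigma> v \<omega> m))" for n \<omega>
  have k: "\<And>n. (\<lambda>\<omega>. fst (conf G lin \<sigma> v \<omega> n)) \<in> measurable (rand_space D) (count_space UNIV)"
    using adm by (simp add: admissible_def)
  have ks: "\<And>n x. (\<lambda>\<omega>. snd (conf G lin \<sigma> v \<omega> n) x) \<in> borel_measurable (rand_space D)"
    using adm by (simp add: admissible_def)
  have mh: "(\<lambda>\<omega>. case_prod h (conf G lin \<sigma> v \<omega> n)) \<in> borel_measurable (rand_space D)" for n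
  proof -
    have "(\<lambda>\<omega>. h (fst (conf G lin \<sigma> v \<omega> n)) (snd (conf G lin \<sigma> v \<omega> n))) \<in> borel_measurable (rand_space D)"
    proof (rule measurable_compose_countable[where f="\<lambda>i \<omega>. h i (snd (conf G lin \<sigma> v \<omega> n))"
          and g="\<lambda>\<omega>. fst (conf G lin \<sigma> v \<omega> n)", OF _ k])
      fix i
      have "poly_deg_le d (h i)" using pucs by (simp add: PUCS_def)
      then show "(\<lambda>\<omega>. h i (snd (conf G lin \<sigma> v \<omega> n))) \<in> borel_measurable (rand_space D)"
        by (rule poly_meas) (rule ks)
    qed
    then show ?thesis by (simp add: case_prod_beta)
  qed
  have mc: "(\<lambda>\<omega>. step_cost G (conf G lin \<sigma> v \<omega> n)) \<in> borel_measurable (rand_space D)" for n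
  proof -
    define F where "F i \<omega> = (case G i of Tick R l' \<Rightarrow> R (snd (conf G lin \<sigma> v \<omega> n)) | _ \<Rightarrow> 0)" for i \<omega>
    have "(\<lambda>\<omega>. F (fst (conf G lin \<sigma> v \<omega> n)) \<omega>) \<in> borel_measurable (rand_space D)"
    proof (rule measurable_compose_countable[where f=F and g="\<lambda>\<omega>. fst (conf G lin \<sigma> v \<omega> n)", OF _ k])
      fix i
      show "(\<lambda>\<omega>. F i \<omega>) \<in> borel_measurable (rand_space D)"
      proof (cases "G i")
        case (Tick R l')
        then have "is_poly R" using wf unfolding wf_program_def by blast
        then obtain d' where "poly_deg_le d' R" by (auto simp: is_poly_def)
        then have "(\<lambda>\<omega>. R (snd (conf G lin \<sigma> v \<omega> n))) \<in> borel_measurable (rand_space D)"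
          by (rule poly_meas) (rule ks)
        then show ?thesis using Tick by (simp add: F_def)
      qed (simp_all add: F_def)
    qed
    then show ?thesis by (simp add: F_def step_cost_def case_prod_beta)
  qed
  have mP: "(\<lambda>\<omega>. P n \<omega>) \<in> borel_measurable (rand_space D)" for n
    unfolding P_def by (intro borel_measurable_sum mc)
  have mPe: "(\<lambda>\<omega>. ennreal (P n \<omega>)) \<in> borel_measurable (rand_space D)" for n
    by (rule measurable_compose[OF mP measurable_ennreal])
  have mS: "(\<lambda>\<omega>. Sf G h lin \<sigma> v \<omega> n) \<in> borel_measurable (rand_space D)" for n
  proof -
    have "(\<lambda>\<omega>. P n \<omega> + case_prod h (conf G lin \<sigma> v \<omega> n)) \<in> borel_measurable (rand_space D)"
      by (intro borel_measurable_add mP mh)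
    then show ?thesis by (simp add: Sf_def P_def)
  qed
  have AEg: "AE \<omega> in rand_space D. \<forall>n. reachable G D (lin, v) (conf G lin \<sigma> v \<omega> n)"
  proof -
    have "AE \<omega> in rand_space D. \<forall>n. \<omega> n \<in> GS D"
      unfolding rand_space_def AE_all_countable
      by (intro allI AE_PiM_component) (use prob_step[OF wf] AE_GS[OF wf] in auto)
    then show ?thesis
    proof eventually_elim
      case (elim \<omega>)
      show ?case
      proof
        fix n show "reachable G D (lin, v) (conf G lin \<sigma> v \<omega> n)"
        proof (induction n)
          case 0 show ?case by (simp add: conf_0 reach_refl)
        next
          case (Suc n)
          have "conf G lin \<sigma> v \<omega> (Suc n) \<in> succs G D (conf G lin \<sigma> v \<omega> n)"
            unfolding conf_Suc using next_in_succs[OF vs hist_ne elim[rule_format, of n]]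
            by (simp add: conf_def)
          then show ?case by (rule reach_step[OF Suc.IH])
        qed
      qed
    qed
  qed
  have bound: "(\<integral>\<^sup>+\<omega>. ennreal (P n \<omega>) \<partial>rand_space D) \<le> ennreal (h lin v)" for n
  proof -
    have "(\<integral>\<^sup>+\<omega>. ennreal (P n \<omega>) \<partial>rand_space D) \<le> (\<integral>\<^sup>+\<omega>. ennreal (Sf G h lin \<sigma> v \<omega> n) \<partial>rand_space D)"
    proof (rule nn_integral_mono_AE)
      show "AE \<omega> in rand_space D. ennreal (P n \<omega>) \<le> ennreal (Sf G h lin \<sigma> v \<omega> n)"
        using AEg
      proof eventually_elim
        case (elim \<omega>)
        have "0 \<le> case_prod h (conf G lin \<sigma> v \<omega> n)" using h_nn'[OF elim[rule_format, of n]] .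
        then show ?case by (intro ennreal_leI) (simp add: Sf_def P_def)
      qed
    qed
    also have "\<dots> \<le> ennreal (h lin v)" using main reach_refl vs mS by blast
    finally show ?thesis .
  qed
  have tcAE: "AE \<omega> in rand_space D. e2ennreal (total_cost G lin \<sigma> v \<omega>) = (SUP n. ennreal (P n \<omega>))"
    using AEg
  proof eventually_elim
    case (elim \<omega>)
    have inc: "incseq (\<lambda>n. P n \<omega>)"
      by (rule incseq_SucI) (simp add: P_def cost_nn'[OF elim[rule_format]])
    have inc': "incseq (\<lambda>n. ereal (P n \<omega>))" using inc by (simp add: incseq_def)
    have L: "(\<lambda>n. ereal (P n \<omega>)) \<longlonglongrightarrow> (SUP n. ereal (P n \<omega>))" by (rule LIMSEQ_SUP[OF inc'])
    have tc: "total_cost G lin \<sigma> v \<omega> = (SUP n. ereal (P n \<omega>))"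
      unfolding total_cost_def using limI[OF L] by (simp add: P_def)
    have L1: "(\<lambda>n. e2ennreal (ereal (P n \<omega>))) \<longlonglongrightarrow> e2ennreal (SUP n. ereal (P n \<omega>))"
      by (rule tendsto_e2ennrealI[OF L])
    have inc2: "incseq (\<lambda>n. ennreal (P n \<omega>))" using inc by (simp add: incseq_def ennreal_leI)
    have L2: "(\<lambda>n. ennreal (P n \<omega>)) \<longlonglongrightarrow> (SUP n. ennreal (P n \<omega>))" by (rule LIMSEQ_SUP[OF inc2])
    have "(SUP n. ennreal (P n \<omega>)) = e2ennreal (SUP n. ereal (P n \<omega>))"
      using LIMSEQ_unique[OF L2] L1 by simp
    with tc show ?case by simp
  qed
  have incAE: "AE \<omega> in rand_space D. ennreal (P i \<omega>) \<le> ennreal (P (Suc i) \<omega>)" for i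
    using AEg
  proof eventually_elim
    case (elim \<omega>)
    show ?case by (intro ennreal_leI) (simp add: P_def cost_nn'[OF elim[rule_format]])
  qed
  have "(\<integral>\<^sup>+\<omega>. e2ennreal (total_cost G lin \<sigma> v \<omega>) \<partial>rand_space D) = (\<integral>\<^sup>+\<omega>. (SUP n. ennreal (P n \<omega>)) \<partial>rand_space D)"
    by (rule nn_integral_cong_AE[OF tcAE])
  also have "\<dots> = (SUP n. (\<integral>\<^sup>+\<omega>. ennreal (P n \<omega>) \<partial>rand_space D))"
    by (rule nn_integral_monotone_convergence_SUP_AE[where f="\<lambda>n \<omega>. ennreal (P n \<omega>)", OF incAE mPe])
  also have "\<dots> \<le> ennreal (h lin v)" by (rule SUP_least) (rule bound)
  finally have I1: "(\<integral>\<^sup>+\<omega>. e2ennreal (total_cost G lin \<sigma> v \<omega>) \<partial>rand_space D) \<le> ennreal (h lin v)" .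
  have hv: "0 \<le> h lin v" using h_nn[OF reach_refl] .
  have "ereal_expect (rand_space D) (total_cost G lin \<sigma> v)
      \<le> enn2ereal (\<integral>\<^sup>+\<omega>. e2ennreal (total_cost G lin \<sigma> v \<omega>) \<partial>rand_space D)"
    unfolding ereal_expect_def by (rule ereal_diff_le_self) simp
  also have "\<dots> \<le> enn2ereal (ennreal (h lin v))" using I1 by (simp add: less_eq_ennreal.rep_eq[symmetric])
  also have "\<dots> = ereal (h lin v)" using hv by simp
  finally show "ereal_expect (rand_space D) (total_cost G lin \<sigma> v) \<le> ereal (h lin v)" .
qed

end

theorem theorem6p9:
  fixes G :: "'l::finite \<Rightarrow> ('l, 'v::finite, 'r::finite) node"
    and lin lout :: 'l
    and D :: "'r \<Rightarrow> real measure"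
    and I :: "'l \<Rightarrow> 'v val set"
    and h :: "'l \<Rightarrow> 'v val \<Rightarrow> real"
    and d :: nat
    and v :: "'v val"
  assumes "wf_program G lout D"
    and "linear_invariant G D lin I"
    and "\<forall>l l' F w. G l = Assign l' F \<longrightarrow> integrable (samp D) (\<lambda>u. h l' (F w u))"
    and "PUCS G D I lout d h"
    and "\<forall>l. \<forall>w\<in>I l. 0 \<le> h l w"
    and "\<forall>l R l'. G l = Tick R l' \<longrightarrow> (\<forall>w\<in>I l. 0 \<le> R w)"
    and "v \<in> I lin"
  shows "supval G D lin v \<le> ereal (h lin v)"
  by (rule final[OF assms])

end
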